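(* Let $\mathbb A$ be the $Q$-MCR algebra described in the context. Assume that $\widetilde Q(x_1,x_2)$ is invertible for all $(x_1,x_2)\in X^2$ and that there is $\varkappa\in\mathbb R$ with $\operatorname{Tr}(\widetilde Q(x,x)^{-1}v^{(2)})=\varkappa\operatorname{Tr}v^{(2)}$ for all $x\in X$, $v^{(2)}\in V^{\otimes2}$. Let $\sharp_1,\dots,\sharp_n\in\{+,-\}$ with $\sharp_i=+$, $\sharp_{i+1}=-$ for some $i\in\{1,\dots,n-1\}$. Then for all $f^{(n)}\in\mathfrak F^{(n)}$, $$\Phi(f^{(n)};\sharp_1,\dots,\sharp_n)=\Phi\big(\widetilde Q_i(x_i,x_{i+1})^{-1}f^{(n)}(x_1,\dots,x_{i+1},x_i,\dots,x_n);\sharp_1,\dots,\sharp_{i+1},\sharp_i,\dots,\sharp_n\big)-\varkappa\,\Phi(g^{(n-2)};\sharp_1,\dots,\sharp_{i-1},\sharp_{i+2},\dots,\sharp_n),$$ where $g^{(n-2)}(x_1,\dots,x_{n-2})=\int_X\operatorname{Tr}_if^{(n)}(x_1,\dots,x_{i-1},x,x,x_i,\dots,x_{n-2})\,dx$.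
   Context: Let $d\ge2$, $X=\mathbb R^d$, $x=(y,z)$ with $y\in Y:=\mathbb R$, $z\in Z:=\mathbb R^{d-1}$. $V=\mathbb C^r$ with standard basis $e_1,\dots,e_r$, $J$ complex conjugation, $\langle u,v\rangle_{V^{\otimes n}}:=(u,Jv)$. $Q:Y^2\to\mathcal L(V^{\otimes2})$ continuous, unitary-valued, $Q(y_1,y_2)^*=Q(y_2,y_1)$, satisfying $Q_1(y_1,y_2)Q_2(y_1,y_3)Q_1(y_2,y_3)=Q_2(y_2,y_3)Q_1(y_1,y_3)Q_2(y_1,y_2)$, where $C_i$ is $C\in\mathcal L(V^{\otimes2})$ acting on factors $i,i+1$. $Q(x_1,x_2):=Q(y_1,y_2)$. $\mathbb S^{(n)}(v_1\otimes\cdots\otimes v_n)=Jv_n\otimes\cdots\otimes Jv_1$ (antilinear); $\widehat Q(x_1,x_2)=\mathbb S^{(2)}Q(x_2,x_1)\mathbb S^{(2)}$; $\langle\widetilde Q(x_1,x_2)e_i\otimes e_j,e_k\otimes e_l\rangle=\langle Q(x_1,x_2)e_k\otimes e_i,e_l\otimes e_j\rangle$. $\operatorname{Tr}(v)=\sum_k(v,e_k\otimes e_k)$ on $V^{\otimes2}$, $\operatorname{Tr}_i$ applies it to factors $i,i+1$ of $V^{\otimes n}$. $\mathcal G=L^2(Z)$; $\mathfrak F^{(n)}$ is the span of $\varphi(y_1..y_n)g_1(z_1)\cdots g_n(z_n)$, $\varphi\in C_0(Y^n;V^{\otimes n})$, $g_i\in\mathcal G$. $\mathbb A$ is the unital $*$-algebra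 spanned by $\mathbf 1$ and $\Phi(f^{(n)};\sharp_1..\sharp_n)$, linear in $f^{(n)}\in\mathfrak F^{(n)}$, with product given by tensoring kernels and concatenating signs, involution $\Phi(f;\sharp_1..\sharp_n)^*=\Phi(\mathbb S^{(n)}f(x_n..x_1);-\sharp_n..-\sharp_1)$, and relations: for $\sharp_i=\sharp_{i+1}=+$: $\Phi(f;\sharp)=\Phi(Q_i(x_i,x_{i+1})f(..,x_{i+1},x_i,..);\sharp)$; for $\sharp_i=\sharp_{i+1}=-$: same with $\widehat Q_i(x_i,x_{i+1})$; for $\sharp_i=-,\sharp_{i+1}=+$: $\Phi(f;\sharp)=\Phi(\widetilde Q_i(x_{i+1},x_i)f(..,x_{i+1},x_i,..);\sharp_1..\sharp_{i+1},\sharp_i..\sharp_n)+\Phi(g^{(n-2)};\sharp_1..\sharp_{i-1},\sharp_{i+2}..\sharp_n)$ with $g^{(n-2)}$ as in the claim. *)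

theory Defs
  imports "HOL-Analysis.Analysis"
begin

text \<open>
V = C^r with basis indexed by a finite type 'r.  An element of V^{\<otimes>n} is represented
  by its coefficient function on index words: v :: 'r list \<Rightarrow> complex (only words of length n
  matter).  Operators on V^{\<otimes>2} are matrices complex^('r\<times>'r)^('r\<times>'r), row index first.
  X = R^d = Y \<times> Z with Y = R and Z = real^'z ('z finite, so d = 1 + CARD('z) \<ge> 2).
  Positions i are 1-based as in the paper: factors i,i+1 are list positions i-1, i.
  Signs: True = +, False = -.
\<close>

type_synonym 'r tens = "'r list \<Rightarrow> complex"
type_synonym 'r op2 = "complex^('r \<times> 'r)^('r \<times> 'r)"
type_synonym ('z,'r) kernel = "(real \<times> (real^'z)) list \<Rightarrow> 'r tens"

definition act_at :: "('r::finite) op2 \<Rightarrow> nat \<Rightarrow> 'r tens \<Rightarrow> 'r tens" where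
  "act_at A i v w = (\<Sum>p\<in>UNIV. A $ (w ! (i-1), w ! i) $ p * v (w[i-1 := fst p, i := snd p]))"

definition swap_at :: "nat \<Rightarrow> 'b list \<Rightarrow> 'b list" where
  "swap_at i xs = xs[i-1 := xs ! i, i := xs ! (i-1)]"

definition del2_at :: "nat \<Rightarrow> 'b list \<Rightarrow> 'b list" where
  "del2_at i xs = take (i-1) xs @ drop (i+1) xs"

definition kswap :: "nat \<Rightarrow> ('z,'r) kernel \<Rightarrow> ('z,'r) kernel" where
  "kswap i f = (\<lambda>xs. f (swap_at i xs))"

definition kop :: "((real \<times> (real^'z)) \<Rightarrow> (real \<times> (real^'z)) \<Rightarrow> ('r::finite) op2) \<Rightarrow> nat
     \<Rightarrow> ('z,'r) kernel \<Rightarrow> ('z,'r) kernel" where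
  "kop A i f = (\<lambda>xs. act_at (A (xs ! (i-1)) (xs ! i)) i (f xs))"

definition trace_at :: "nat \<Rightarrow> ('r::finite) tens \<Rightarrow> 'r tens" where
  "trace_at i v w = (\<Sum>k\<in>UNIV. v (take (i-1) w @ [k, k] @ drop (i-1) w))"

definition Tr2 :: "complex^('r::finite \<times> 'r) \<Rightarrow> complex" where
  "Tr2 v = (\<Sum>k\<in>UNIV. v $ (k, k))"

definition gker :: "nat \<Rightarrow> ('z::finite,'r::finite) kernel \<Rightarrow> ('z,'r) kernel" where
  "gker i f = (\<lambda>xs w. integral\<^sup>L lborel
      (\<lambda>x::real \<times> (real^'z). trace_at i (f (take (i-1) xs @ [x, x] @ drop (i-1) xs)) w))"

text \<open>Tilde Q: <Qt e_i\<otimes>e_j, e_k\<otimes>e_l> = <Q e_k\<otimes>e_i, e_l\<otimes>e_j>.\<close>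
definition Qtilde :: "('r::finite) op2 \<Rightarrow> 'r op2" where
  "Qtilde A = (\<chi> p q. A $ (snd p, snd q) $ (fst p, fst q))"

text \<open>Hat: S^{(2)} A S^{(2)}, S^{(2)} the antilinear map e_a\<otimes>e_b \<mapsto> e_b\<otimes>e_a.\<close>
definition Qhat :: "('r::finite) op2 \<Rightarrow> 'r op2" where
  "Qhat A = (\<chi> p q. cnj (A $ (snd p, fst p) $ (snd q, fst q)))"

definition cadj :: "('r::finite) op2 \<Rightarrow> 'r op2" where
  "cadj A = (\<chi> p q. cnj (A $ q $ p))"

definition kadd :: "('z,'r) kernel \<Rightarrow> ('z,'r) kernel \<Rightarrow> ('z,'r) kernel" where
  "kadd f g = (\<lambda>xs w. f xs w + g xs w)"

definition kscale :: "complex \<Rightarrow> ('z,'r) kernel \<Rightarrow> ('z,'r) kernel" where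
  "kscale c f = (\<lambda>xs w. c * f xs w)"

definition ktens :: "nat \<Rightarrow> ('z,'r) kernel \<Rightarrow> ('z,'r) kernel \<Rightarrow> ('z,'r) kernel" where
  "ktens n f g = (\<lambda>xs w. f (take n xs) (take n w) * g (drop n xs) (drop n w))"

text \<open>S^{(n)} f(x_n,..,x_1), S^{(n)} antilinear with e_{w1}\<otimes>..\<otimes>e_{wn} \<mapsto> e_{wn}\<otimes>..\<otimes>e_{w1}.\<close>
definition kstar :: "('z,'r) kernel \<Rightarrow> ('z,'r) kernel" where
  "kstar f = (\<lambda>xs w. cnj (f (rev xs) (rev w)))"

definition C0 :: "nat \<Rightarrow> (real list \<Rightarrow> 'r tens) \<Rightarrow> bool" where
  "C0 n \<phi> \<longleftrightarrow>
     (\<forall>ys w. (length ys \<noteq> n \<or> length w \<noteq> n) \<longrightarrow> \<phi> ys w = 0) \<and>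
     (\<forall>ys. length ys = n \<longrightarrow> (\<forall>e>0. \<exists>d>0. \<forall>ys'. length ys' = n \<and> (\<forall>j<n. \<bar>ys' ! j - ys ! j\<bar> < d)
          \<longrightarrow> (\<forall>w. cmod (\<phi> ys' w - \<phi> ys w) < e))) \<and>
     (\<exists>R. \<forall>ys. length ys = n \<and> (\<exists>j<n. \<bar>ys ! j\<bar> > R) \<longrightarrow> (\<forall>w. \<phi> ys w = 0))"

definition L2Z :: "(real^'z::finite \<Rightarrow> complex) \<Rightarrow> bool" where
  "L2Z g \<longleftrightarrow> g \<in> borel_measurable lborel \<and> integrable lborel (\<lambda>z. (cmod (g z))\<^sup>2)"

definition genker :: "nat \<Rightarrow> (real list \<Rightarrow> 'r tens) \<Rightarrow> (nat \<Rightarrow> real^'z \<Rightarrow> complex) \<Rightarrow> ('z,'r) kernel" where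
  "genker n \<phi> gs = (\<lambda>xs w. if length xs = n \<and> length w = n
       then \<phi> (map fst xs) w * (\<Prod>j<n. gs j (snd (xs ! j))) else 0)"

definition Fn :: "nat \<Rightarrow> ('z::finite,'r) kernel set" where
  "Fn n = {f. \<exists>(m::nat) \<phi>s gss. (\<forall>j<m. C0 n (\<phi>s j) \<and> (\<forall>k<n. L2Z (gss j k))) \<and>
              f = (\<lambda>xs w. \<Sum>j<m. genker n (\<phi>s j) (gss j) xs w)}"

definition Q_admissible :: "(real \<Rightarrow> real \<Rightarrow> ('r::finite) op2) \<Rightarrow> bool" where
  "Q_admissible Q \<longleftrightarrow>
     continuous_on UNIV (\<lambda>p. Q (fst p) (snd p)) \<and>
     (\<forall>y1 y2. Q y1 y2 ** cadj (Q y1 y2) = mat 1 \<and> cadj (Q y1 y2) ** Q y1 y2 = mat 1) \<and>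
     (\<forall>y1 y2. cadj (Q y1 y2) = Q y2 y1) \<and>
     (\<forall>y1 y2 y3 v w. length w = 3 \<longrightarrow>
        act_at (Q y1 y2) 1 (act_at (Q y1 y3) 2 (act_at (Q y2 y3) 1 v)) w =
        act_at (Q y2 y3) 2 (act_at (Q y1 y3) 1 (act_at (Q y1 y2) 2 v)) w)"

text \<open>A unital complex *-algebra ('a, scalar multiplication sc, involution st) together with
  \<Phi> satisfying the defining relations of the Q-MCR algebra, and generated by 1 and the \<Phi>'s.\<close>
definition QMCR_algebra ::
  "(real \<Rightarrow> real \<Rightarrow> ('r::finite) op2) \<Rightarrow> (complex \<Rightarrow> 'a::ring_1 \<Rightarrow> 'a) \<Rightarrow> ('a \<Rightarrow> 'a)
     \<Rightarrow> (('z::finite,'r) kernel \<Rightarrow> bool list \<Rightarrow> 'a) \<Rightarrow> bool" where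
  "QMCR_algebra Q sc st \<Phi> \<longleftrightarrow>
     vector_space sc \<and>
     (\<forall>c a b. sc c (a * b) = sc c a * b \<and> sc c (a * b) = a * sc c b) \<and>
     (\<forall>a b. st (a + b) = st a + st b) \<and> (\<forall>c a. st (sc c a) = sc (cnj c) (st a)) \<and>
     (\<forall>a b. st (a * b) = st b * st a) \<and> (\<forall>a. st (st a) = a) \<and>
     module.span sc (insert 1 {\<Phi> f ss | f ss. f \<in> Fn (length ss)}) = UNIV \<and>
     (\<forall>f. \<Phi> f [] = sc (f [] []) 1) \<and>
     (\<forall>ss f g. f \<in> Fn (length ss) \<longrightarrow> g \<in> Fn (length ss) \<longrightarrow>
        \<Phi> (kadd f g) ss = \<Phi> f ss + \<Phi> g ss) \<and>
     (\<forall>ss c f. f \<in> Fn (length ss) \<longrightarrow> \<Phi> (kscale c f) ss = sc c (\<Phi> f ss)) \<and>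
     (\<forall>ss ts f g. f \<in> Fn (length ss) \<longrightarrow> g \<in> Fn (length ts) \<longrightarrow>
        \<Phi> f ss * \<Phi> g ts = \<Phi> (ktens (length ss) f g) (ss @ ts)) \<and>
     (\<forall>ss f. f \<in> Fn (length ss) \<longrightarrow> st (\<Phi> f ss) = \<Phi> (kstar f) (rev (map Not ss))) \<and>
     (\<forall>ss f i. f \<in> Fn (length ss) \<longrightarrow> 1 \<le> i \<longrightarrow> i < length ss \<longrightarrow>
        ss ! (i-1) \<longrightarrow> ss ! i \<longrightarrow>
        \<Phi> f ss = \<Phi> (kop (\<lambda>x1 x2. Q (fst x1) (fst x2)) i (kswap i f)) ss) \<and>
     (\<forall>ss f i. f \<in> Fn (length ss) \<longrightarrow> 1 \<le> i \<longrightarrow> i < length ss \<longrightarrow>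
        \<not> ss ! (i-1) \<longrightarrow> \<not> ss ! i \<longrightarrow>
        \<Phi> f ss = \<Phi> (kop (\<lambda>x1 x2. Qhat (Q (fst x2) (fst x1))) i (kswap i f)) ss) \<and>
     (\<forall>ss f i. f \<in> Fn (length ss) \<longrightarrow> 1 \<le> i \<longrightarrow> i < length ss \<longrightarrow>
        \<not> ss ! (i-1) \<longrightarrow> ss ! i \<longrightarrow>
        \<Phi> f ss = \<Phi> (kop (\<lambda>x1 x2. Qtilde (Q (fst x2) (fst x1))) i (kswap i f)) (swap_at i ss)
                 + \<Phi> (gker i f) (del2_at i ss))"

end

theory Submission
  imports Defs
begin


lemma Fn_zero: "f \<in> Fn n \<Longrightarrow> length xs \<noteq> n \<or> length w \<noteq> n \<Longrightarrow> f xs w = 0"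
  by (auto simp: Fn_def genker_def)

lemma act_at_zero_len: "(\<forall>u. length u = length w \<longrightarrow> v u = 0) \<Longrightarrow> act_at A i v w = 0"
  by (simp add: act_at_def)

lemma upd2_upd2: "1 \<le> i \<Longrightarrow> w[i-1 := a, i := b, i-1 := c, i := d] = w[i-1 := c, i := d]"
  by (metis One_nat_def diff_less less_numeral_extra(1) list_update_overwrite list_update_swap nat_neq_iff order_less_le_trans)

lemma act_at_comp:
  assumes "1 \<le> i" "i < length w"
  shows "act_at A i (act_at B i v) w = act_at (A ** B) i v w"
proof -
  have ne: "i - 1 \<noteq> i" using assms by simp
  have in1: "\<And>a b. w[i-1 := a, i := b] ! (i-1) = a" using assms ne by (simp add: nth_list_update)
  have in2: "\<And>a b. w[i-1 := a, i := b] ! i = b" using assms by simp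
  have "act_at A i (act_at B i v) w =
     (\<Sum>p\<in>UNIV. A $ (w ! (i-1), w ! i) $ p * (\<Sum>q\<in>UNIV. B $ p $ q * v (w[i-1 := fst q, i := snd q])))"
    unfolding act_at_def in1 in2 upd2_upd2[OF assms(1)] prod.collapse by (rule refl)
  also have "\<dots> = (\<Sum>q\<in>UNIV. (\<Sum>p\<in>UNIV. A $ (w ! (i-1), w ! i) $ p * B $ p $ q) * v (w[i-1 := fst q, i := snd q]))"
    by (simp only: sum_distrib_left sum_distrib_right mult.assoc) (rule sum.swap)
  also have "\<dots> = act_at (A ** B) i v w"
    unfolding act_at_def by (simp add: matrix_matrix_mult_def)
  finally show ?thesis .
qed

lemma act_at_id:
  assumes "1 \<le> i" "i < length w"
  shows "act_at (mat 1) i v w = v w"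
proof -
  have "act_at (mat 1) i v w = (\<Sum>p\<in>UNIV. (if (w ! (i-1), w ! i) = p then 1 else 0) * v (w[i-1 := fst p, i := snd p]))"
    unfolding act_at_def by (simp add: mat_def)
  also have "\<dots> = (\<Sum>p\<in>UNIV. if (w ! (i-1), w ! i) = p then v (w[i-1 := fst p, i := snd p]) else 0)"
    by (rule sum.cong) auto
  also have "\<dots> = v (w[i-1 := w ! (i-1), i := w ! i])"
    by (subst sum.delta') auto
  also have "w[i-1 := w ! (i-1), i := w ! i] = w" by simp
  finally show ?thesis .
qed

lemma swap_at_len[simp]: "length (swap_at i xs) = length xs"
  by (simp add: swap_at_def)

lemma swap_at_nth1: "1 \<le> i \<Longrightarrow> i < length xs \<Longrightarrow> swap_at i xs ! (i-1) = xs ! i"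
  by (simp add: swap_at_def nth_list_update)
lemma swap_at_nth2: "1 \<le> i \<Longrightarrow> i < length xs \<Longrightarrow> swap_at i xs ! i = xs ! (i-1)"
  by (simp add: swap_at_def nth_list_update)
lemma swap_at_nth: "1 \<le> i \<Longrightarrow> i < length xs \<Longrightarrow> j < length xs \<Longrightarrow>
   swap_at i xs ! j = xs ! (if j = i - 1 then i else if j = i then i - 1 else j)"
  by (auto simp: swap_at_def nth_list_update)

lemma swap_swap: "1 \<le> i \<Longrightarrow> i < length xs \<Longrightarrow> swap_at i (swap_at i xs) = xs"
  by (rule nth_equalityI) (auto simp: swap_at_nth)

lemma invertible_mi: "invertible A \<Longrightarrow> A ** matrix_inv A = mat 1 \<and> matrix_inv A ** A = mat 1"
  unfolding invertible_def matrix_inv_def by (rule someI_ex)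



lemma mv_axis: "(M *v axis p (1::complex)) $ q = M $ q $ p"
  by (simp add: matrix_vector_mult_def axis_def if_distrib cong: if_cong)

lemma Tr2_axis: "Tr2 (axis p (1::complex)) = (if fst p = snd p then 1 else 0)"
proof (cases p)
  case (Pair a b) then show ?thesis by (cases "a = b") (auto simp: Tr2_def axis_def intro!: sum.neutral)
qed

lemma sum_UNIV_pair: "(\<Sum>p\<in>(UNIV::('a::finite\<times>'b::finite) set). F p) = (\<Sum>a\<in>UNIV. \<Sum>b\<in>UNIV. F (a,b))"
  using sum.cartesian_product[of "\<lambda>a b. F (a,b)" UNIV UNIV] by simp

lemma trace_act:
  fixes M :: "('r::finite) op2"
  assumes hM: "\<forall>v. Tr2 (M *v v) = c * Tr2 v" and i: "1 \<le> i"
    and hg: "\<not> (i - 1 \<le> length w) \<Longrightarrow> \<forall>u. length u = length w + 2 \<longrightarrow> g u = 0"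
  shows "trace_at i (act_at M i g) w = c * trace_at i g w"
proof (cases "i - 1 \<le> length w")
  case True
  have diag: "(\<Sum>k\<in>UNIV. M $ (k,k) $ p) = c * (if fst p = snd p then 1 else 0)" for p
  proof -
    have "Tr2 (M *v axis p 1) = c * Tr2 (axis p 1)" using hM by blast
    then show ?thesis unfolding Tr2_axis by (simp add: Tr2_def mv_axis)
  qed
  define W where "W a b = take (i-1) w @ [a,b] @ drop (i-1) w" for a b
  have lt: "length (take (i-1) w) = i - 1" using True by simp
  have n1: "W a b ! (i-1) = a" for a b unfolding W_def using lt by (simp add: nth_append)
  obtain k where ik: "i = Suc k" using i by (cases i) auto
  have n2: "W a b ! i = b" for a b unfolding W_def using lt ik
    by (simp add: nth_append)
  have up: "(W a b)[i-1 := c', i := d] = W c' d" for a b c' d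
    unfolding W_def using lt ik
    by (simp add: list_update_append)
  have "trace_at i (act_at M i g) w = (\<Sum>k\<in>UNIV. \<Sum>p\<in>UNIV. M $ (k,k) $ p * g (W (fst p) (snd p)))"
    unfolding trace_at_def act_at_def W_def[symmetric] n1 n2 up ..
  also have "\<dots> = (\<Sum>p\<in>UNIV. (\<Sum>k\<in>UNIV. M $ (k,k) $ p) * g (W (fst p) (snd p)))"
    by (simp only: sum_distrib_right) (rule sum.swap)
  also have "\<dots> = (\<Sum>p\<in>UNIV. c * (if fst p = snd p then g (W (fst p) (snd p)) else 0))"
    by (simp add: diag) (rule sum.cong, auto)
  also have "\<dots> = c * (\<Sum>a\<in>UNIV. \<Sum>b\<in>UNIV. (if a = b then g (W a b) else 0))"
    by (simp only: sum_distrib_left[symmetric] sum_UNIV_pair fst_conv snd_conv)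
  also have "\<dots> = c * trace_at i g w"
    by (simp add: trace_at_def W_def)
  finally show ?thesis .
next
  case False
  then have "take (i-1) w = w" "drop (i-1) w = []" by auto
  then show ?thesis using hg[OF False]
    by (simp add: trace_at_def act_at_zero_len)
qed



lemma mi_entry:
  fixes A :: "complex^'n::finite^'n"
  assumes "det A \<noteq> 0"
  shows "matrix_inv A $ k $ j = det (\<chi> i j'. if j' = k then axis j 1 $ i else A $ i $ j') / det A"
proof -
  have inv: "invertible A" using assms invertible_det_nz by blast
  define x where "x = matrix_inv A *v axis j (1::complex)"
  have "A *v x = axis j 1"
    unfolding x_def matrix_vector_mul_assoc using invertible_mi[OF inv] by simp
  then have "x = (\<chi> k. det(\<chi> i j'. if j'=k then axis j 1 $ i else A$i$j') / det A)"
    using cramer[OF assms] by blast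
  then have "x $ k = det (\<chi> i j'. if j' = k then axis j 1 $ i else A $ i $ j') / det A" by simp
  moreover have "x $ k = matrix_inv A $ k $ j"
    unfolding x_def by (simp add: matrix_vector_mult_def axis_def if_distrib cong: if_cong)
  ultimately show ?thesis by simp
qed

lemma det_cont:
  fixes F :: "'a::topological_space \<Rightarrow> complex^'n::finite^'n"
  assumes "\<forall>a b. continuous_on S (\<lambda>x. F x $ a $ b)"
  shows "continuous_on S (\<lambda>x. det (F x))"
  unfolding det_def using assms
  by (intro continuous_on_sum continuous_on_mult continuous_on_const continuous_on_prod) auto

lemma Minv_cont:
  fixes Q :: "real \<Rightarrow> real \<Rightarrow> ('r::finite) op2"
  assumes "Q_admissible Q" "\<forall>y1 y2. invertible (Qtilde (Q y1 y2))"
  shows "\<forall>a b. continuous_on UNIV (\<lambda>p. matrix_inv (Qtilde (Q (fst p) (snd p))) $ a $ b)"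
proof (intro allI)
  fix a b :: "'r \<times> 'r"
  define M where "M p = Qtilde (Q (fst p) (snd p))" for p :: "real \<times> real"
  have Qc: "continuous_on UNIV (\<lambda>p. Q (fst p) (snd p))" using assms(1) by (simp add: Q_admissible_def)
  have Mc: "continuous_on UNIV (\<lambda>p. M p $ c $ d)" for c d
    unfolding M_def Qtilde_def using Qc by (simp add: continuous_on_component)
  have dnz: "det (M p) \<noteq> 0" for p using assms(2) invertible_det_nz unfolding M_def by blast
  have eq: "matrix_inv (M p) $ a $ b = det (\<chi> i j'. if j' = a then axis b 1 $ i else M p $ i $ j') / det (M p)" for p
    by (rule mi_entry[OF dnz])
  have c1: "continuous_on UNIV (\<lambda>p. det (\<chi> i j'. if j' = a then axis b (1::complex) $ i else M p $ i $ j'))"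
    apply (rule det_cont)
    apply (intro allI)
    subgoal for c d by (cases "d = a") (simp_all add: Mc)
    done
  have "continuous_on UNIV (\<lambda>p. matrix_inv (M p) $ a $ b)"
    unfolding eq using dnz by (intro continuous_on_divide c1 det_cont) (auto intro: Mc)
  then show "continuous_on UNIV (\<lambda>p. matrix_inv (Qtilde (Q (fst p) (snd p))) $ a $ b)"
    unfolding M_def .
qed



definition lnhds :: "nat \<Rightarrow> real list \<Rightarrow> real list filter" where
  "lnhds n ys = (INF d\<in>{0<..}. principal {ys'. length ys' = n \<and> (\<forall>j<n. \<bar>ys'!j - ys!j\<bar> < d)})"

lemma eventually_lnhds:
  "eventually P (lnhds n ys) \<longleftrightarrow> (\<exists>d>0. \<forall>ys'. length ys' = n \<and> (\<forall>j<n. \<bar>ys'!j - ys!j\<bar> < d) \<longrightarrow> P ys')"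
  unfolding lnhds_def
proof (subst eventually_INF_base)
  show "{0<..} \<noteq> ({}::real set)" by auto
  show "\<exists>x\<in>{0<..}. principal {ys'. length ys' = n \<and> (\<forall>j<n. \<bar>ys'!j - ys!j\<bar> < x)}
      \<le> inf (principal {ys'. length ys' = n \<and> (\<forall>j<n. \<bar>ys'!j - ys!j\<bar> < a)})
        (principal {ys'. length ys' = n \<and> (\<forall>j<n. \<bar>ys'!j - ys!j\<bar> < b)})"
    if "a \<in> {0<..}" "b \<in> {0<..}" for a b :: real
    using that by (intro bexI[of _ "min a b"]) (auto simp: inf_principal)
  show "(\<exists>b\<in>{0<..}. eventually P (principal {ys'. length ys' = n \<and> (\<forall>j<n. \<bar>ys'!j - ys!j\<bar> < b)})) =
    (\<exists>d>0. \<forall>ys'. length ys' = n \<and> (\<forall>j<n. \<bar>ys'!j - ys!j\<bar> < d) \<longrightarrow> P ys')"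
    by (auto simp: eventually_principal)
qed

lemma lnhds_len: "eventually (\<lambda>ys'. length ys' = n) (lnhds n ys)"
  unfolding eventually_lnhds by (intro exI[of _ 1]) auto

lemma lnhds_nth: "j < n \<Longrightarrow> ((\<lambda>ys'. ys'!j) \<longlongrightarrow> ys!j) (lnhds n ys)"
  unfolding tendsto_iff dist_real_def eventually_lnhds by auto

lemma C0_tendsto:
  assumes "C0 n \<phi>" "length ys = n"
  shows "((\<lambda>ys'. \<phi> ys' w) \<longlongrightarrow> \<phi> ys w) (lnhds n ys)"
  unfolding tendsto_iff dist_norm eventually_lnhds
proof (intro allI impI)
  fix e :: real assume "e > 0"
  then obtain d where "d > 0" "\<forall>ys'. length ys' = n \<and> (\<forall>j<n. \<bar>ys' ! j - ys ! j\<bar> < d) \<longrightarrow> (\<forall>w. cmod (\<phi> ys' w - \<phi> ys w) < e)"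
    using assms \<open>e > 0\<close> unfolding C0_def by blast
  then show "\<exists>d>0. \<forall>ys'. length ys' = n \<and> (\<forall>j<n. \<bar>ys' ! j - ys ! j\<bar> < d) \<longrightarrow> cmod (\<phi> ys' w - \<phi> ys w) < e"
    by blast
qed

lemma tendsto_uniform:
  assumes "finite W" "\<And>w. w \<in> W \<Longrightarrow> ((\<lambda>ys'. F ys' w) \<longlongrightarrow> F ys w) (lnhds n ys)"
    "\<And>ys' w. w \<notin> W \<Longrightarrow> F ys' w = 0" "e > 0"
  shows "\<exists>d>0. \<forall>ys'. length ys' = n \<and> (\<forall>j<n. \<bar>ys'!j - ys!j\<bar> < d) \<longrightarrow> (\<forall>w. cmod (F ys' w - F ys w) < e)"
proof -
  have "eventually (\<lambda>ys'. \<forall>w\<in>W. dist (F ys' w) (F ys w) < e) (lnhds n ys)"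
    using assms(1,2,4) by (intro eventually_ball_finite) (auto simp: tendsto_iff)
  then obtain d where d: "d > 0" "\<forall>ys'. length ys' = n \<and> (\<forall>j<n. \<bar>ys'!j - ys!j\<bar> < d) \<longrightarrow> (\<forall>w\<in>W. dist (F ys' w) (F ys w) < e)"
    unfolding eventually_lnhds by blast
  show ?thesis
  proof (intro exI[of _ d] conjI allI impI)
    fix ys' w assume h: "length ys' = n \<and> (\<forall>j<n. \<bar>ys'!j - ys!j\<bar> < d)"
    show "cmod (F ys' w - F ys w) < e"
    proof (cases "w \<in> W")
      case True then show ?thesis using d h by (auto simp: dist_norm)
    next
      case False then show ?thesis using assms(3,4) by simp
    qed
  qed (rule d(1))
qed

lemma finite_words: "finite {w :: ('r::finite) list. length w = n}"
  using finite_lists_length_eq[of "UNIV :: 'r set" n] by simp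

lemma C0I:
  fixes \<phi> :: "real list \<Rightarrow> ('r::finite) tens"
  assumes "\<And>ys w. (length ys \<noteq> n \<or> length w \<noteq> n) \<Longrightarrow> \<phi> ys w = 0"
    and "\<And>ys w. length ys = n \<Longrightarrow> length w = n \<Longrightarrow> ((\<lambda>ys'. \<phi> ys' w) \<longlongrightarrow> \<phi> ys w) (lnhds n ys)"
    and "\<exists>R. \<forall>ys. length ys = n \<and> (\<exists>j<n. \<bar>ys ! j\<bar> > R) \<longrightarrow> (\<forall>w. \<phi> ys w = 0)"
  shows "C0 n \<phi>"
  unfolding C0_def
proof (intro conjI allI impI)
  show "\<phi> ys w = 0" if "length ys \<noteq> n \<or> length w \<noteq> n" for ys w using assms(1) that by blast
  show "\<exists>d>0. \<forall>ys'. length ys' = n \<and> (\<forall>j<n. \<bar>ys' ! j - ys ! j\<bar> < d) \<longrightarrow> (\<forall>w. cmod (\<phi> ys' w - \<phi> ys w) < e)"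
    if "length ys = n" "e > 0" for ys e
    by (rule tendsto_uniform[OF finite_words[of n]]) (use assms(1,2) that in auto)
qed (use assms(3) in blast)



definition swi :: "nat \<Rightarrow> nat \<Rightarrow> nat" where
  "swi i j = (if j = i - 1 then i else if j = i then i - 1 else j)"

lemma swap_at_nth_swi: "1 \<le> i \<Longrightarrow> i < length xs \<Longrightarrow> j < length xs \<Longrightarrow> swap_at i xs ! j = xs ! swi i j"
  using swap_at_nth[of i xs j] by (simp add: swi_def)

lemma swi_swi: "1 \<le> i \<Longrightarrow> swi i (swi i j) = j"
  by (auto simp: swi_def)

lemma swi_lt: "1 \<le> i \<Longrightarrow> i < n \<Longrightarrow> j < n \<Longrightarrow> swi i j < n"
  by (auto simp: swi_def)

lemma map_swap: "i < length xs \<Longrightarrow> map f (swap_at i xs) = swap_at i (map f xs)"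
  by (auto simp: swap_at_def map_update)

lemma prod_swi:
  assumes "1 \<le> i" "i < n"
  shows "(\<Prod>k<n. G k (swi i k)) = (\<Prod>k<n. (G (swi i k) k :: 'a::comm_monoid_mult))"
  by (rule prod.reindex_bij_witness[of "{..<n}" "swi i" "swi i"]) (use assms in \<open>auto simp: swi_swi swi_lt\<close>)

lemma act_at_sum: "act_at A i (\<lambda>u. \<Sum>j\<in>J. g j u) w = (\<Sum>j\<in>J. act_at A i (g j) w)"
  unfolding act_at_def by (simp only: sum_distrib_left) (rule sum.swap)

lemma act_at_scale: "act_at A i (\<lambda>u. v u * c) w = act_at A i v w * c"
  unfolding act_at_def by (simp add: sum_distrib_right mult.assoc)

lemma C0_zero: "C0 n \<phi> \<Longrightarrow> length ys \<noteq> n \<or> length w \<noteq> n \<Longrightarrow> \<phi> ys w = 0"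
  unfolding C0_def by blast

lemma act_genker:
  fixes \<phi> :: "real list \<Rightarrow> ('r::finite) tens" and M :: "real \<Rightarrow> real \<Rightarrow> 'r op2"
    and xs :: "(real \<times> (real^'z::finite)) list"
  assumes C: "C0 n \<phi>" and i: "1 \<le> i" "i < n"
  shows "act_at (M (fst (xs!(i-1))) (fst (xs!i))) i (genker n \<phi> gs (swap_at i xs)) w
   = genker n (\<lambda>ys w. if length ys = n \<and> length w = n then act_at (M (ys!(i-1)) (ys!i)) i (\<phi> (swap_at i ys)) w else 0)
       (\<lambda>k. gs (swi i k)) xs w"
proof (cases "length xs = n")
  case True
  define P where "P = (\<Prod>k<n. gs (swi i k) (snd (xs!k)))"
  have P1: "(\<Prod>k<n. gs k (snd (swap_at i xs ! k))) = (\<Prod>k<n. gs k (snd (xs ! swi i k)))"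
    by (rule prod.cong) (use True i in \<open>auto simp: swap_at_nth_swi\<close>)
  have P2: "(\<Prod>k<n. gs k (snd (xs ! swi i k))) = P"
    unfolding P_def by (rule prod_swi[OF i, of "\<lambda>k l. gs k (snd (xs ! l))"])
  have g: "genker n \<phi> gs (swap_at i xs) = (\<lambda>u. \<phi> (swap_at i (map fst xs)) u * P)"
  proof
    fix u show "genker n \<phi> gs (swap_at i xs) u = \<phi> (swap_at i (map fst xs)) u * P"
      using True C0_zero[OF C] P1 P2 i by (auto simp: genker_def map_swap)
  qed
  show ?thesis
  proof (cases "length w = n")
    case True': True
    show ?thesis unfolding g act_at_scale using True True' i
      by (simp add: genker_def P_def)
  next
    case False
    have "act_at (M (fst (xs!(i-1))) (fst (xs!i))) i (\<phi> (swap_at i (map fst xs))) w = 0"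
      by (rule act_at_zero_len) (use False C0_zero[OF C] in auto)
    then show ?thesis unfolding g act_at_scale using False by (simp add: genker_def)
  qed
next
  case False
  have "act_at (M (fst (xs!(i-1))) (fst (xs!i))) i (genker n \<phi> gs (swap_at i xs)) w = 0"
    by (rule act_at_zero_len) (use False in \<open>auto simp: genker_def\<close>)
  then show ?thesis using False by (simp add: genker_def)
qed

lemma lnhds_swap:
  assumes "1 \<le> i" "i < n" "length ys = n"
  shows "filterlim (swap_at i) (lnhds n (swap_at i ys)) (lnhds n ys)"
  unfolding filterlim_iff
proof (intro allI impI)
  fix P assume "eventually P (lnhds n (swap_at i ys))"
  then obtain d where d: "d > 0" "\<forall>ys'. length ys' = n \<and> (\<forall>j<n. \<bar>ys'!j - swap_at i ys!j\<bar> < d) \<longrightarrow> P ys'"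
    unfolding eventually_lnhds by blast
  show "eventually (\<lambda>x. P (swap_at i x)) (lnhds n ys)"
    unfolding eventually_lnhds
  proof (intro exI[of _ d] conjI allI impI)
    fix ys' assume h: "length ys' = n \<and> (\<forall>j<n. \<bar>ys' ! j - ys ! j\<bar> < d)"
    have "\<forall>j<n. \<bar>swap_at i ys' ! j - swap_at i ys ! j\<bar> < d"
      using h assms by (auto simp: swap_at_nth_swi swi_lt)
    then show "P (swap_at i ys')" using d h by simp
  qed (rule d(1))
qed

lemma C0_kop:
  fixes \<phi> :: "real list \<Rightarrow> ('r::finite) tens" and M :: "real \<Rightarrow> real \<Rightarrow> 'r op2"
  assumes C: "C0 n \<phi>" and i: "1 \<le> i" "i < n"
    and Mc: "\<forall>a b. continuous_on UNIV (\<lambda>p. M (fst p) (snd p) $ a $ b)"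
  shows "C0 n (\<lambda>ys w. if length ys = n \<and> length w = n then act_at (M (ys!(i-1)) (ys!i)) i (\<phi> (swap_at i ys)) w else 0)"
    (is "C0 n ?\<psi>")
proof (rule C0I)
  show "?\<psi> ys w = 0" if "length ys \<noteq> n \<or> length w \<noteq> n" for ys w using that by auto
next
  fix ys :: "real list" and w :: "'r list"
  assume ly: "length ys = n" and lw: "length w = n"
  define E where "E ys' = (\<Sum>p\<in>UNIV. M (ys'!(i-1)) (ys'!i) $ (w!(i-1), w!i) $ p * \<phi> (swap_at i ys') (w[i-1 := fst p, i := snd p]))" for ys'
  have ev: "eventually (\<lambda>ys'. E ys' = ?\<psi> ys' w) (lnhds n ys)"
    using lnhds_len[of n ys] by eventually_elim (use lw in \<open>simp add: E_def act_at_def\<close>)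
  have val: "?\<psi> ys w = E ys" using ly lw by (simp add: E_def act_at_def)
  have Mt: "((\<lambda>ys'. M (ys'!(i-1)) (ys'!i) $ a $ b) \<longlongrightarrow> M (ys!(i-1)) (ys!i) $ a $ b) (lnhds n ys)" for a b
  proof -
    have ic: "isCont (\<lambda>p. M (fst p) (snd p) $ a $ b) (ys!(i-1), ys!i)"
      using Mc continuous_on_eq_continuous_at[OF open_UNIV] by blast
    have "((\<lambda>ys'. (ys'!(i-1), ys'!i)) \<longlongrightarrow> (ys!(i-1), ys!i)) (lnhds n ys)"
      using i by (intro tendsto_Pair lnhds_nth) auto
    from isCont_tendsto_compose[OF ic this] show ?thesis by simp
  qed
  have pt: "((\<lambda>ys'. \<phi> (swap_at i ys') u) \<longlongrightarrow> \<phi> (swap_at i ys) u) (lnhds n ys)" for u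
    using filterlim_compose[OF C0_tendsto[OF C, of "swap_at i ys" u] lnhds_swap[OF i ly]] ly by simp
  have "(E \<longlongrightarrow> E ys) (lnhds n ys)"
    unfolding E_def by (intro tendsto_sum tendsto_mult Mt pt)
  then show "((\<lambda>ys'. ?\<psi> ys' w) \<longlongrightarrow> ?\<psi> ys w) (lnhds n ys)"
    unfolding val using ev by (rule Lim_transform_eventually)
next
  obtain R where R: "\<forall>ys. length ys = n \<and> (\<exists>j<n. \<bar>ys ! j\<bar> > R) \<longrightarrow> (\<forall>w. \<phi> ys w = 0)"
    using C unfolding C0_def by blast
  show "\<exists>R. \<forall>ys. length ys = n \<and> (\<exists>j<n. \<bar>ys ! j\<bar> > R) \<longrightarrow> (\<forall>w. ?\<psi> ys w = 0)"
  proof (intro exI[of _ R] allI impI)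
    fix ys w assume h: "length ys = n \<and> (\<exists>j<n. \<bar>ys ! j\<bar> > R)"
    then obtain j where j: "j < n" "\<bar>ys ! j\<bar> > R" by blast
    have "swap_at i ys ! swi i j = ys ! j" using h j i by (simp add: swap_at_nth_swi swi_lt swi_swi)
    then have "\<forall>u. \<phi> (swap_at i ys) u = 0" using R h j i swi_lt[OF i j(1)] by (metis swap_at_len)
    then show "?\<psi> ys w = 0" by (simp add: act_at_def)
  qed
qed

lemma Fn_kop:
  fixes M :: "real \<Rightarrow> real \<Rightarrow> ('r::finite) op2" and f :: "('z::finite,'r) kernel"
  assumes Mc: "\<forall>a b. continuous_on UNIV (\<lambda>p. M (fst p) (snd p) $ a $ b)" and fF: "f \<in> Fn n"
    and i: "1 \<le> i" "i < n"
  shows "kop (\<lambda>x1 x2. M (fst x1) (fst x2)) i (kswap i f) \<in> Fn n"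
proof -
  obtain m :: nat and \<phi>s :: "nat \<Rightarrow> real list \<Rightarrow> 'r tens" and gss :: "nat \<Rightarrow> nat \<Rightarrow> real^'z \<Rightarrow> complex"
    where h: "\<forall>j<m. C0 n (\<phi>s j) \<and> (\<forall>k<n. L2Z (gss j k))"
    and f: "f = (\<lambda>xs w. \<Sum>j<m. genker n (\<phi>s j) (gss j) xs w)"
    using fF unfolding Fn_def mem_Collect_eq by blast
  define \<phi>s' where "\<phi>s' j = (\<lambda>ys w. if length ys = n \<and> length w = n then act_at (M (ys!(i-1)) (ys!i)) i (\<phi>s j (swap_at i ys)) w else 0)" for j
  define gss' where "gss' j = (\<lambda>k. gss j (swi i k))" for j
  have c1: "\<forall>j<m. C0 n (\<phi>s' j) \<and> (\<forall>k<n. L2Z (gss' j k))"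
    using h C0_kop[OF _ i Mc] swi_lt[OF i] unfolding \<phi>s'_def gss'_def by blast
  have c2: "kop (\<lambda>x1 x2. M (fst x1) (fst x2)) i (kswap i f) = (\<lambda>xs w. \<Sum>j<m. genker n (\<phi>s' j) (gss' j) xs w)"
  proof (intro ext)
    fix xs :: "(real \<times> (real^'z)) list" and w
    have "kop (\<lambda>x1 x2. M (fst x1) (fst x2)) i (kswap i f) xs w
        = (\<Sum>j<m. act_at (M (fst (xs!(i-1))) (fst (xs!i))) i (genker n (\<phi>s j) (gss j) (swap_at i xs)) w)"
      unfolding kop_def kswap_def f by (rule act_at_sum)
    also have "\<dots> = (\<Sum>j<m. genker n (\<phi>s' j) (gss' j) xs w)"
      by (rule sum.cong) (use h i in \<open>auto simp only: \<phi>s'_def gss'_def intro!: act_genker\<close>)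
    finally show "kop (\<lambda>x1 x2. M (fst x1) (fst x2)) i (kswap i f) xs w = (\<Sum>j<m. genker n (\<phi>s' j) (gss' j) xs w)" .
  qed
  show ?thesis unfolding Fn_def using c1 c2 by blast
qed



definition ins :: "nat \<Rightarrow> 'b list \<Rightarrow> 'b \<Rightarrow> 'b list" where
  "ins a xs x = take a xs @ [x, x] @ drop a xs"

lemma ins_len[simp]: "length (ins a xs x) = length xs + 2"
  by (simp add: ins_def)

lemma nth_ins: "a \<le> length ys \<Longrightarrow> j < length ys + 2 \<Longrightarrow>
   ins a ys y ! j = (if j < a then ys ! j else if j < a + 2 then y else ys ! (j - 2))"
  by (auto simp: ins_def nth_append min_def nth_Cons' )

lemma map_ins: "map f (ins a xs x) = ins a (map f xs) (f x)"
  by (simp add: ins_def take_map drop_map)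

lemma ins_close:
  assumes "length ys = m" "length ys' = m" "a \<le> m" "\<forall>j<m. \<bar>ys'!j - ys!j\<bar> < d" "\<bar>y' - y\<bar> < d"
  shows "\<forall>j<m+2. \<bar>ins a ys' y' ! j - ins a ys y ! j\<bar> < d"
proof (intro allI impI)
  fix j assume j: "j < m + 2"
  show "\<bar>ins a ys' y' ! j - ins a ys y ! j\<bar> < d"
    using assms j by (auto simp: nth_ins)
qed

lemma prod_ins:
  fixes G :: "nat \<Rightarrow> 'b \<Rightarrow> 'c::comm_monoid_mult"
  assumes "length xs = m" "a \<le> m"
  shows "(\<Prod>j<m+2. G j (ins a xs x ! j)) =
     (\<Prod>j<m. G (if j < a then j else j + 2) (xs ! j)) * G a x * G (a+1) x"
proof -
  define e where "e j = (if j < a then j else j + 2)" for j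
  have inj: "inj_on e {..<m}" unfolding e_def inj_on_def by auto
  have S: "{..<m+2} = insert a (insert (a+1) (e ` {..<m}))"
  proof (intro set_eqI iffI)
    fix x assume x: "x \<in> {..<m+2}"
    show "x \<in> insert a (insert (a+1) (e ` {..<m}))"
    proof (cases "x < a")
      case True then show ?thesis using assms by (auto simp: e_def image_iff intro!: bexI[of _ x])
    next
      case False
      then show ?thesis using x
        by (cases "x = a \<or> x = a + 1") (auto simp: e_def image_iff intro!: bexI[of _ "x - 2"])
    qed
  qed (use assms in \<open>auto simp: e_def\<close>)
  have na: "a \<notin> insert (a+1) (e ` {..<m})" "a + 1 \<notin> e ` {..<m}" by (auto simp: e_def)
  have "(\<Prod>j<m+2. G j (ins a xs x ! j)) = G a (ins a xs x ! a) * (G (a+1) (ins a xs x ! (a+1)) *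
        (\<Prod>j\<in>e ` {..<m}. G j (ins a xs x ! j)))"
    unfolding S using na by (simp add: prod.insert)
  also have "(\<Prod>j\<in>e ` {..<m}. G j (ins a xs x ! j)) = (\<Prod>j<m. G (e j) (ins a xs x ! e j))"
    by (rule prod.reindex[OF inj, unfolded comp_def])
  also have "\<dots> = (\<Prod>j<m. G (e j) (xs ! j))"
    by (rule prod.cong) (use assms in \<open>auto simp: e_def nth_ins\<close>)
  finally show ?thesis using assms by (simp add: nth_ins e_def mult_ac)
qed

lemma prod_integral:
  fixes F :: "real \<Rightarrow> complex" and G :: "real^'z::finite \<Rightarrow> complex"
  assumes F: "integrable lborel F" and G: "integrable lborel G"
  shows "integrable (lborel :: (real \<times> (real^'z)) measure) (\<lambda>x. F (fst x) * G (snd x))"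
    and "integral\<^sup>L (lborel :: (real \<times> (real^'z)) measure) (\<lambda>x. F (fst x) * G (snd x)) = integral\<^sup>L lborel F * integral\<^sup>L lborel G"
proof -
  have Pi: "pair_sigma_finite (lborel :: real measure) (lborel :: (real^'z) measure)"
    by (simp add: pair_sigma_finite_def sigma_finite_lborel)
  have [measurable]: "F \<in> borel_measurable lborel" "G \<in> borel_measurable lborel"
    using F G by auto
  have meas: "(\<lambda>x. F (fst x) * G (snd x)) \<in> borel_measurable (lborel \<Otimes>\<^sub>M lborel)"
    by measurable
  have int: "integrable (lborel \<Otimes>\<^sub>M lborel) (\<lambda>x. F (fst x) * G (snd x))"
  proof (rule pair_sigma_finite.Fubini_integrable[OF Pi meas])
    show "integrable lborel (\<lambda>x. \<integral>y. norm (F (fst (x, y)) * G (snd (x, y))) \<partial>lborel)"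
      using F G by (simp add: norm_mult)
    show "AE x in lborel. integrable lborel (\<lambda>y. F (fst (x, y)) * G (snd (x, y)))"
      using G by simp
  qed
  then show "integrable (lborel :: (real \<times> (real^'z)) measure) (\<lambda>x. F (fst x) * G (snd x))"
    by (simp add: lborel_prod)
  have "integral\<^sup>L (lborel \<Otimes>\<^sub>M lborel) (\<lambda>x. F (fst x) * G (snd x)) = (\<integral>x. (\<integral>y. F x * G y \<partial>lborel) \<partial>lborel)"
    using pair_sigma_finite.integral_fst'[OF Pi int] by simp
  also have "\<dots> = integral\<^sup>L lborel F * integral\<^sup>L lborel G" by simp
  finally show "integral\<^sup>L (lborel :: (real \<times> (real^'z)) measure) (\<lambda>x. F (fst x) * G (snd x)) = integral\<^sup>L lborel F * integral\<^sup>L lborel G"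
    by (simp add: lborel_prod)
qed

lemma ab_le: "0 \<le> a \<Longrightarrow> 0 \<le> b \<Longrightarrow> a * b \<le> a\<^sup>2 + (b::real)\<^sup>2"
proof -
  assume "0 \<le> a" "0 \<le> b"
  have "0 \<le> (a - b)\<^sup>2" by simp
  moreover have "0 \<le> a * b" using \<open>0 \<le> a\<close> \<open>0 \<le> b\<close> by simp
  ultimately show ?thesis by (simp add: power2_eq_square algebra_simps)
qed

lemma L2_prod:
  fixes g h :: "real^'z::finite \<Rightarrow> complex"
  assumes "L2Z g" "L2Z h"
  shows "integrable lborel (\<lambda>z. g z * h z)"
proof -
  have [measurable]: "g \<in> borel_measurable lborel" "h \<in> borel_measurable lborel"
    using assms by (auto simp: L2Z_def)
  have i1: "integrable lborel (\<lambda>z. (cmod (g z))\<^sup>2 + (cmod (h z))\<^sup>2)"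
    using assms by (auto simp: L2Z_def)
  have m1: "(\<lambda>z. g z * h z) \<in> borel_measurable lborel" by measurable
  have a1: "AE z in lborel. norm (g z * h z) \<le> norm ((cmod (g z))\<^sup>2 + (cmod (h z))\<^sup>2)"
    by (auto simp: norm_mult intro!: ab_le)
  show ?thesis by (rule Bochner_Integration.integrable_bound[OF i1 m1 a1])
qed




locale Kctx =
  fixes \<phi> :: "real list \<Rightarrow> ('r::finite) tens" and n m a :: nat
  assumes C: "C0 n \<phi>" and nm: "n = m + 2" and am: "a \<le> m"
begin

lemma K_support: obtains R where "R \<ge> 0" "\<And>ys y u. length ys = m \<Longrightarrow> \<bar>y\<bar> > R \<Longrightarrow> \<phi> (ins a ys y) u = 0"
proof -
  obtain R0 where R0: "\<forall>ys. length ys = n \<and> (\<exists>j<n. \<bar>ys ! j\<bar> > R0) \<longrightarrow> (\<forall>w. \<phi> ys w = 0)"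
    using C unfolding C0_def by blast
  show ?thesis
  proof (rule that[of "\<bar>R0\<bar>"])
    fix ys :: "real list" and y u assume h: "length ys = m" "\<bar>y\<bar> > \<bar>R0\<bar>"
    have "ins a ys y ! a = y" using h am by (simp add: nth_ins)
    moreover have "a < n" using nm am by simp
    ultimately show "\<phi> (ins a ys y) u = 0" using R0 h nm by (metis abs_ge_self ins_len order_le_less_trans)
  qed simp
qed

lemma C0_cont_at: "length zs = n \<Longrightarrow> e > 0 \<Longrightarrow>
   \<exists>d>0. \<forall>zs'. length zs' = n \<and> (\<forall>j<n. \<bar>zs'!j - zs!j\<bar> < d) \<longrightarrow> (\<forall>w. cmod (\<phi> zs' w - \<phi> zs w) < e)"
  using C unfolding C0_def by blast

lemma K_cont_y: "length ys = m \<Longrightarrow> continuous_on UNIV (\<lambda>y. \<phi> (ins a ys y) u)"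
  unfolding continuous_on_iff
proof (intro ballI allI impI)
  fix x :: real and e :: real assume ys: "length ys = m" and e: "e > 0"
  obtain d where d: "d > 0" "\<forall>zs'. length zs' = n \<and> (\<forall>j<n. \<bar>zs'!j - ins a ys x!j\<bar> < d) \<longrightarrow> (\<forall>w. cmod (\<phi> zs' w - \<phi> (ins a ys x) w) < e)"
    using C0_cont_at[of "ins a ys x" e] ys nm e by auto
  show "\<exists>d>0. \<forall>x'\<in>UNIV. dist x' x < d \<longrightarrow> dist (\<phi> (ins a ys x') u) (\<phi> (ins a ys x) u) < e"
  proof (intro exI[of _ d] conjI ballI impI)
    fix x' :: real assume "dist x' x < d"
    then have "\<forall>j<m+2. \<bar>ins a ys x' ! j - ins a ys x ! j\<bar> < d"
      using ins_close[OF ys ys am, of d x' x] d(1) by (simp add: dist_real_def)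
    then show "dist (\<phi> (ins a ys x') u) (\<phi> (ins a ys x) u) < e"
      using d(2) ys nm by (simp add: dist_norm)
  qed (rule d(1))
qed

lemma K_int: "length ys = m \<Longrightarrow> integrable lborel (\<lambda>y. \<phi> (ins a ys y) u)"
proof -
  assume ys: "length ys = m"
  obtain R where R: "R \<ge> 0" "\<And>ys y u. length ys = m \<Longrightarrow> \<bar>y\<bar> > R \<Longrightarrow> \<phi> (ins a ys y) u = 0"
    using K_support by blast
  have "integrable lborel (\<lambda>y. indicator {-R..R} y *\<^sub>R \<phi> (ins a ys y) u)"
    by (rule borel_integrable_compact) (auto intro: continuous_on_subset[OF K_cont_y[OF ys]])
  moreover have "indicator {-R..R} y *\<^sub>R \<phi> (ins a ys y) u = \<phi> (ins a ys y) u" for y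
    using R(2)[OF ys, of y u] by (cases "\<bar>y\<bar> \<le> R") (auto simp: indicator_def abs_le_iff)
  ultimately show ?thesis by simp
qed

lemma K_unif:
  assumes ys: "length ys = m" and e: "e > 0"
  shows "\<exists>d>0. \<forall>ys'. length ys' = m \<and> (\<forall>j<m. \<bar>ys'!j - ys!j\<bar> < d) \<longrightarrow> (\<forall>y. cmod (\<phi> (ins a ys' y) u - \<phi> (ins a ys y) u) < e)"
proof -
  obtain R where R: "R \<ge> 0" "\<And>ys y u. length ys = m \<Longrightarrow> \<bar>y\<bar> > R \<Longrightarrow> \<phi> (ins a ys y) u = 0"
    using K_support by blast
  have "\<forall>y0. \<exists>dd>0. \<forall>zs'. length zs' = n \<and> (\<forall>j<n. \<bar>zs'!j - ins a ys y0!j\<bar> < dd) \<longrightarrow> (\<forall>w. cmod (\<phi> zs' w - \<phi> (ins a ys y0) w) < e/2)"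
    by (intro allI C0_cont_at) (use ys nm e in auto)
  then obtain dd where dd: "\<forall>y0. dd y0 > 0 \<and> (\<forall>zs'. length zs' = n \<and> (\<forall>j<n. \<bar>zs'!j - ins a ys y0!j\<bar> < dd y0) \<longrightarrow> (\<forall>w. cmod (\<phi> zs' w - \<phi> (ins a ys y0) w) < e/2))"
    by (auto dest!: choice)
  obtain T where T: "T \<subseteq> {-R..R}" "finite T" "{-R..R} \<subseteq> (\<Union>c\<in>T. ball c (dd c / 2))"
  proof (rule compactE_image[of "{-R..R}" "{-R..R}" "\<lambda>c. ball c (dd c / 2)"])
    show "{-R..R} \<subseteq> (\<Union>c\<in>{-R..R}. ball c (dd c / 2))"
      using dd by (auto intro!: bexI)
  qed auto
  have Tne: "T \<noteq> {}" using T(3) R(1) by auto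
  define d where "d = Min ((\<lambda>c. dd c / 2) ` T)"
  have d0: "d > 0" unfolding d_def using T(2) Tne dd by (simp add: Min_gr_iff)
  have dle: "d \<le> dd c / 2" if "c \<in> T" for c unfolding d_def using T(2) that by (intro Min_le) auto
  show ?thesis
  proof (intro exI[of _ d] conjI allI impI)
    fix ys' y assume h: "length ys' = m \<and> (\<forall>j<m. \<bar>ys'!j - ys!j\<bar> < d)"
    show "cmod (\<phi> (ins a ys' y) u - \<phi> (ins a ys y) u) < e"
    proof (cases "\<bar>y\<bar> > R")
      case True then show ?thesis using R(2) h ys e by simp
    next
      case False
      then have "y \<in> {-R..R}" by auto
      then obtain c where c: "c \<in> T" "dist c y < dd c / 2" using T(3) by auto
      have ddc: "dd c > 0" using dd by blast
      have cl1: "\<forall>j<m+2. \<bar>ins a ys' y ! j - ins a ys c ! j\<bar> < dd c"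
        by (rule ins_close[OF ys _ am]) (use h c dle[OF c(1)] ddc in \<open>auto simp: dist_real_def abs_minus_commute\<close>)
      have cl2: "\<forall>j<m+2. \<bar>ins a ys y ! j - ins a ys c ! j\<bar> < dd c"
        by (rule ins_close[OF ys ys am]) (use c ddc in \<open>auto simp: dist_real_def abs_minus_commute\<close>)
      have i1: "cmod (\<phi> (ins a ys' y) u - \<phi> (ins a ys c) u) < e/2"
        using dd cl1 h nm by simp
      have i2: "cmod (\<phi> (ins a ys y) u - \<phi> (ins a ys c) u) < e/2"
        using dd cl2 ys nm by simp
      have "cmod (\<phi> (ins a ys' y) u - \<phi> (ins a ys y) u)
          \<le> cmod (\<phi> (ins a ys' y) u - \<phi> (ins a ys c) u) + cmod (\<phi> (ins a ys y) u - \<phi> (ins a ys c) u)"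
        using norm_triangle_ineq4[of "\<phi> (ins a ys' y) u - \<phi> (ins a ys c) u" "\<phi> (ins a ys y) u - \<phi> (ins a ys c) u"]
        by simp
      then show ?thesis using i1 i2 by simp
    qed
  qed (rule d0)
qed

lemma K_tendsto:
  assumes ys: "length ys = m"
  shows "((\<lambda>ys'. integral\<^sup>L lborel (\<lambda>y. \<phi> (ins a ys' y) u)) \<longlongrightarrow> integral\<^sup>L lborel (\<lambda>y. \<phi> (ins a ys y) u)) (lnhds m ys)"
  unfolding tendsto_iff
proof (intro allI impI)
  fix e :: real assume e: "e > 0"
  obtain R where R: "R \<ge> 0" "\<And>ys y u. length ys = m \<Longrightarrow> \<bar>y\<bar> > R \<Longrightarrow> \<phi> (ins a ys y) u = 0"
    using K_support by blast
  define e' where "e' = e / (2 * R + 1)"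
  have e': "e' > 0" using e R(1) by (simp add: e'_def)
  have e'b: "e' * (2 * R) < e"
  proof -
    have "e' * (2 * R + 1) = e" using R(1) by (simp add: e'_def)
    then show ?thesis using e' by (simp add: algebra_simps)
  qed
  obtain d where d: "d > 0" "\<forall>ys'. length ys' = m \<and> (\<forall>j<m. \<bar>ys'!j - ys!j\<bar> < d) \<longrightarrow> (\<forall>y. cmod (\<phi> (ins a ys' y) u - \<phi> (ins a ys y) u) < e')"
    using K_unif[OF ys e'] by blast
  show "eventually (\<lambda>ys'. dist (integral\<^sup>L lborel (\<lambda>y. \<phi> (ins a ys' y) u)) (integral\<^sup>L lborel (\<lambda>y. \<phi> (ins a ys y) u)) < e) (lnhds m ys)"
    unfolding eventually_lnhds
  proof (intro exI[of _ d] conjI allI impI)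
    fix ys' assume h: "length ys' = m \<and> (\<forall>j<m. \<bar>ys'!j - ys!j\<bar> < d)"
    have int1: "integrable lborel (\<lambda>y. \<phi> (ins a ys' y) u)" using K_int h by blast
    have int2: "integrable lborel (\<lambda>y. \<phi> (ins a ys y) u)" using K_int ys by blast
    have intI: "integrable lborel (\<lambda>y. e' * indicator {-R..R} y :: real)"
      by (intro integrable_mult_right integrable_real_indicator) (auto simp: emeasure_lborel_Icc_eq)
    have bnd: "norm (\<phi> (ins a ys' y) u - \<phi> (ins a ys y) u) \<le> e' * indicator {-R..R} y" for y
    proof (cases "\<bar>y\<bar> > R")
      case True then show ?thesis using R(2) h ys e' by simp
    next
      case False then show ?thesis using d h by (auto simp: indicator_def abs_le_iff less_imp_le)
    qed
    have "dist (integral\<^sup>L lborel (\<lambda>y. \<phi> (ins a ys' y) u)) (integral\<^sup>L lborel (\<lambda>y. \<phi> (ins a ys y) u))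
        = norm (integral\<^sup>L lborel (\<lambda>y. \<phi> (ins a ys' y) u - \<phi> (ins a ys y) u))"
      using int1 int2 by (simp add: dist_norm)
    also have "\<dots> \<le> integral\<^sup>L lborel (\<lambda>y. norm (\<phi> (ins a ys' y) u - \<phi> (ins a ys y) u))"
      by (rule integral_norm_bound)
    also have "\<dots> \<le> integral\<^sup>L lborel (\<lambda>y. e' * indicator {-R..R} y)"
      by (rule integral_mono) (use int1 int2 intI bnd in auto)
    also have "\<dots> = e' * (2 * R)" using R(1) by simp
    finally show "dist (integral\<^sup>L lborel (\<lambda>y. \<phi> (ins a ys' y) u)) (integral\<^sup>L lborel (\<lambda>y. \<phi> (ins a ys y) u)) < e"
      using e'b by simp
  qed (rule d(1))
qed

end



definition gphi :: "nat \<Rightarrow> nat \<Rightarrow> complex \<Rightarrow> (real list \<Rightarrow> ('r::finite) tens) \<Rightarrow> real list \<Rightarrow> 'r tens" where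
  "gphi a m c \<phi> ys w = (if length ys = m \<and> length w = m
      then c * (\<Sum>k\<in>UNIV. integral\<^sup>L lborel (\<lambda>y. \<phi> (ins a ys y) (ins a w k))) else 0)"

definition ggs :: "nat \<Rightarrow> (nat \<Rightarrow> 'g) \<Rightarrow> nat \<Rightarrow> 'g" where
  "ggs a gs k = gs (if k < a then k else k + 2)"

lemma C0_gphi:
  fixes \<phi> :: "real list \<Rightarrow> ('r::finite) tens"
  assumes C: "C0 n \<phi>" and nm: "n = m + 2" and am: "a \<le> m"
  shows "C0 m (gphi a m c \<phi>)"
proof (rule C0I)
  interpret Kctx \<phi> n m a using assms by unfold_locales
  show "gphi a m c \<phi> ys w = 0" if "length ys \<noteq> m \<or> length w \<noteq> m" for ys w
    using that by (auto simp: gphi_def)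
  show "((\<lambda>ys'. gphi a m c \<phi> ys' w) \<longlongrightarrow> gphi a m c \<phi> ys w) (lnhds m ys)"
    if ys: "length ys = m" and w: "length w = m" for ys w
  proof -
    have ev: "eventually (\<lambda>ys'. c * (\<Sum>k\<in>UNIV. integral\<^sup>L lborel (\<lambda>y. \<phi> (ins a ys' y) (ins a w k))) = gphi a m c \<phi> ys' w) (lnhds m ys)"
      using lnhds_len[of m ys] by eventually_elim (use w in \<open>simp add: gphi_def\<close>)
    have val: "gphi a m c \<phi> ys w = c * (\<Sum>k\<in>UNIV. integral\<^sup>L lborel (\<lambda>y. \<phi> (ins a ys y) (ins a w k)))"
      using ys w by (simp add: gphi_def)
    have "((\<lambda>ys'. c * (\<Sum>k\<in>UNIV. integral\<^sup>L lborel (\<lambda>y. \<phi> (ins a ys' y) (ins a w k)))) \<longlongrightarrow>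
           c * (\<Sum>k\<in>UNIV. integral\<^sup>L lborel (\<lambda>y. \<phi> (ins a ys y) (ins a w k)))) (lnhds m ys)"
      by (intro tendsto_mult tendsto_const tendsto_sum K_tendsto ys)
    then show ?thesis unfolding val using ev by (rule Lim_transform_eventually)
  qed
  obtain R0 where R0: "\<forall>ys. length ys = n \<and> (\<exists>j<n. \<bar>ys ! j\<bar> > R0) \<longrightarrow> (\<forall>w. \<phi> ys w = 0)"
    using C unfolding C0_def by blast
  show "\<exists>R. \<forall>ys. length ys = m \<and> (\<exists>j<m. \<bar>ys ! j\<bar> > R) \<longrightarrow> (\<forall>w. gphi a m c \<phi> ys w = 0)"
  proof (intro exI[of _ R0] allI impI)
    fix ys w assume h: "length ys = m \<and> (\<exists>j<m. \<bar>ys ! j\<bar> > R0)"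
    then obtain j where j: "j < m" "\<bar>ys ! j\<bar> > R0" by blast
    have z: "\<phi> (ins a ys y) u = 0" for y u
    proof -
      define j' where "j' = (if j < a then j else j + 2)"
      have "ins a ys y ! j' = ys ! j" using h j am by (auto simp: nth_ins j'_def)
      moreover have "j' < n" using j nm by (simp add: j'_def)
      ultimately show ?thesis using R0 h j nm by (metis ins_len)
    qed
    show "gphi a m c \<phi> ys w = 0" by (simp add: gphi_def z)
  qed
qed

lemma trace_ins: "trace_at i v w = (\<Sum>k\<in>UNIV. v (ins (i-1) w k))"
  by (simp add: trace_at_def ins_def)

lemma gker_ins: "gker i f xs w = integral\<^sup>L lborel (\<lambda>x. trace_at i (f (ins (i-1) xs x)) w)"
  by (simp add: gker_def ins_def)

lemma gker_genker:
  fixes \<phi> :: "real list \<Rightarrow> ('r::finite) tens" and gs :: "nat \<Rightarrow> real^'z::finite \<Rightarrow> complex"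
    and xs :: "(real \<times> (real^'z)) list" and w :: "'r list"
  assumes C: "C0 n \<phi>" and L: "\<forall>k<n. L2Z (gs k)" and i: "1 \<le> i" "i < n"
  shows "integrable lborel (\<lambda>x. trace_at i (genker n \<phi> gs (ins (i-1) xs x)) w)"
    and "gker i (genker n \<phi> gs) xs w =
         genker (n-2) (gphi (i-1) (n-2) (integral\<^sup>L lborel (\<lambda>z. gs (i-1) z * gs i z)) \<phi>) (ggs (i-1) gs) xs w"
proof -
  define a where "a = i - 1"
  define m where "m = n - 2"
  have nm: "n = m + 2" and am: "a \<le> m" and ia: "i = a + 1" using i by (auto simp: a_def m_def)
  interpret Kctx \<phi> n m a using C nm am by unfold_locales
  define Cg where "Cg = integral\<^sup>L lborel (\<lambda>z. gs a z * gs (a+1) z)"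
  have "integrable lborel (\<lambda>x. trace_at i (genker n \<phi> gs (ins a xs x)) w) \<and>
        integral\<^sup>L lborel (\<lambda>x. trace_at i (genker n \<phi> gs (ins a xs x)) w) =
         genker m (gphi a m Cg \<phi>) (ggs a gs) xs w"
  proof (cases "length xs = m \<and> length w = m")
    case True
    define ys where "ys = map fst xs"
    have lys: "length ys = m" using True by (simp add: ys_def)
    define P where "P = (\<Prod>j<m. ggs a gs j (snd (xs ! j)))"
    define F where "F y = P * (\<Sum>k\<in>UNIV. \<phi> (ins a ys y) (ins a w k))" for y
    define Gz where "Gz z = gs a z * gs (a+1) z" for z
    have pt: "trace_at i (genker n \<phi> gs (ins a xs x)) w = F (fst x) * Gz (snd x)" for x
    proof -
      have pr: "(\<Prod>j<n. gs j (snd (ins a xs x ! j))) = P * Gz (snd x)"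
        unfolding nm using prod_ins[of xs m a "\<lambda>j x. gs j (snd x)" x] True am
        by (simp add: P_def Gz_def ggs_def mult_ac)
      show ?thesis unfolding trace_ins ia[symmetric] a_def[symmetric]
        using True nm pr by (simp add: genker_def map_ins ys_def F_def Gz_def sum_distrib_left sum_distrib_right mult_ac)
    qed
    have iF: "integrable lborel F" unfolding F_def
      by (intro integrable_mult_right Bochner_Integration.integrable_sum K_int lys)
    have iG: "integrable lborel Gz" unfolding Gz_def
      by (rule L2_prod) (use L nm am in auto)
    have intF: "integral\<^sup>L lborel F = P * (\<Sum>k\<in>UNIV. integral\<^sup>L lborel (\<lambda>y. \<phi> (ins a ys y) (ins a w k)))"
      unfolding F_def by (simp add: integral_sum K_int lys)
    show ?thesis
      unfolding pt using prod_integral[OF iF iG] True lys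
      by (simp add: genker_def gphi_def ys_def[symmetric] P_def[symmetric] intF Cg_def Gz_def[abs_def] mult_ac)
  next
    case False
    have z: "trace_at i (genker n \<phi> gs (ins a xs x)) w = 0" for x
      unfolding trace_ins using False nm by (auto simp: genker_def)
    show ?thesis unfolding z using False by (auto simp: genker_def)
  qed
  then show "integrable lborel (\<lambda>x. trace_at i (genker n \<phi> gs (ins (i-1) xs x)) w)"
    and "gker i (genker n \<phi> gs) xs w =
         genker (n-2) (gphi (i-1) (n-2) (integral\<^sup>L lborel (\<lambda>z. gs (i-1) z * gs i z)) \<phi>) (ggs (i-1) gs) xs w"
    unfolding gker_ins by (simp_all add: a_def[symmetric] m_def[symmetric] Cg_def ia)
qed

lemma trace_sum: "trace_at i (\<lambda>u. \<Sum>j\<in>J. g j u) w = (\<Sum>j\<in>J. trace_at i (g j) w)"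
  unfolding trace_at_def by (rule sum.swap)

lemma Fn_gker:
  fixes f :: "('z::finite,'r::finite) kernel"
  assumes fF: "f \<in> Fn n" and i: "1 \<le> i" "i < n"
  shows "gker i f \<in> Fn (n-2)"
proof -
  obtain m :: nat and \<phi>s :: "nat \<Rightarrow> real list \<Rightarrow> 'r tens" and gss :: "nat \<Rightarrow> nat \<Rightarrow> real^'z \<Rightarrow> complex"
    where h: "\<forall>j<m. C0 n (\<phi>s j) \<and> (\<forall>k<n. L2Z (gss j k))"
    and f: "f = (\<lambda>xs w. \<Sum>j<m. genker n (\<phi>s j) (gss j) xs w)"
    using fF unfolding Fn_def mem_Collect_eq by blast
  define \<phi>s' where "\<phi>s' j = gphi (i-1) (n-2) (integral\<^sup>L lborel (\<lambda>z. gss j (i-1) z * gss j i z)) (\<phi>s j)" for j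
  define gss' where "gss' j = ggs (i-1) (gss j)" for j
  have c1: "\<forall>j<m. C0 (n-2) (\<phi>s' j) \<and> (\<forall>k<n-2. L2Z (gss' j k))"
  proof (intro allI impI conjI)
    fix j assume j: "j < m"
    have nn: "n = n - 2 + 2" using i by simp
    show "C0 (n-2) (\<phi>s' j)" unfolding \<phi>s'_def
      by (rule C0_gphi[OF _ nn]) (use h j i in auto)
    show "L2Z (gss' j k)" if "k < n - 2" for k
      using h j that i by (auto simp: gss'_def ggs_def)
  qed
  have c2: "gker i f = (\<lambda>xs w. \<Sum>j<m. genker (n-2) (\<phi>s' j) (gss' j) xs w)"
  proof (intro ext)
    fix xs :: "(real \<times> (real^'z)) list" and w :: "'r list"
    have "gker i f xs w = integral\<^sup>L lborel (\<lambda>x. \<Sum>j<m. trace_at i (genker n (\<phi>s j) (gss j) (ins (i-1) xs x)) w)"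
      unfolding gker_ins f by (simp only: trace_sum)
    also have "\<dots> = (\<Sum>j<m. integral\<^sup>L lborel (\<lambda>x. trace_at i (genker n (\<phi>s j) (gss j) (ins (i-1) xs x)) w))"
      apply (rule Bochner_Integration.integral_sum)
      subgoal for j using gker_genker(1)[of n "\<phi>s j" "gss j" i xs w] h i by auto
      done
    also have "\<dots> = (\<Sum>j<m. genker (n-2) (\<phi>s' j) (gss' j) xs w)"
      apply (rule sum.cong[OF refl])
      subgoal for j using gker_genker(2)[of n "\<phi>s j" "gss j" i xs w] h i unfolding gker_ins \<phi>s'_def gss'_def by auto
      done
    finally show "gker i f xs w = (\<Sum>j<m. genker (n-2) (\<phi>s' j) (gss' j) xs w)" .
  qed
  show ?thesis unfolding Fn_def using c1 c2 by blast
qed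

lemma swap_at_nth1': "Suc 0 \<le> i \<Longrightarrow> i < length xs \<Longrightarrow> swap_at i xs ! (i - Suc 0) = xs ! i"
  using swap_at_nth1 by simp
lemma swap_at_nth2': "Suc 0 \<le> i \<Longrightarrow> i < length xs \<Longrightarrow> swap_at i xs ! i = xs ! (i - Suc 0)"
  using swap_at_nth2 by simp

lemma del2_swap: "1 \<le> i \<Longrightarrow> i < length xs \<Longrightarrow> del2_at i (swap_at i xs) = del2_at i xs"
  by (simp add: del2_at_def swap_at_def)

lemma del2_len: "1 \<le> i \<Longrightarrow> i < length xs \<Longrightarrow> length (del2_at i xs) = length xs - 2"
  by (simp add: del2_at_def)

theorem proposition2p3:
  fixes Q :: "real \<Rightarrow> real \<Rightarrow> ('r::finite) op2"
    and sc :: "complex \<Rightarrow> 'a::ring_1 \<Rightarrow> 'a" and st :: "'a \<Rightarrow> 'a"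
    and \<Phi> :: "('z::finite, 'r) kernel \<Rightarrow> bool list \<Rightarrow> 'a"
    and \<kappa> :: real and ss :: "bool list" and i :: nat and f :: "('z, 'r) kernel"
  assumes "Q_admissible Q"
    and "QMCR_algebra Q sc st \<Phi>"
    and "\<forall>y1 y2. invertible (Qtilde (Q y1 y2))"
    and "\<forall>y v. Tr2 (matrix_inv (Qtilde (Q y y)) *v v) = complex_of_real \<kappa> * Tr2 v"
    and "1 \<le> i" and "i < length ss" and "ss ! (i-1)" and "\<not> ss ! i"
    and "f \<in> Fn (length ss)"
  shows "\<Phi> f ss =
           \<Phi> (kop (\<lambda>x1 x2. matrix_inv (Qtilde (Q (fst x1) (fst x2)))) i (kswap i f)) (swap_at i ss)
           - sc (complex_of_real \<kappa>) (\<Phi> (gker i f) (del2_at i ss))"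
proof -
  note Qa = assms(1) and alg = assms(2) and inv = assms(3) and tr = assms(4)
    and i1 = assms(5) and iN = assms(6) and s1 = assms(7) and s2 = assms(8) and fF = assms(9)
  define n where "n = length ss"
  define ss' where "ss' = swap_at i ss"
  define Mi where "Mi = (\<lambda>y1 y2. matrix_inv (Qtilde (Q y1 y2)))"
  define h where "h = kop (\<lambda>x1 x2. Mi (fst x1) (fst x2)) i (kswap i f)"
  have lss': "length ss' = n" by (simp add: ss'_def n_def)
  have hF: "h \<in> Fn (length ss')"
    unfolding h_def lss' n_def Mi_def
    by (rule Fn_kop[OF Minv_cont[OF Qa inv] fF i1 iN])
  have rel3: "\<forall>ss f i. f \<in> Fn (length ss) \<longrightarrow> 1 \<le> i \<longrightarrow> i < length ss \<longrightarrow>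
        \<not> ss ! (i-1) \<longrightarrow> ss ! i \<longrightarrow>
        \<Phi> f ss = \<Phi> (kop (\<lambda>x1 x2. Qtilde (Q (fst x2) (fst x1))) i (kswap i f)) (swap_at i ss)
                 + \<Phi> (gker i f) (del2_at i ss)"
    and scl: "\<forall>ss c f. f \<in> Fn (length ss) \<longrightarrow> \<Phi> (kscale c f) ss = sc c (\<Phi> f ss)"
    using alg unfolding QMCR_algebra_def by blast+
  have n1: "\<not> ss' ! (i-1)" unfolding ss'_def swap_at_nth1[OF i1 iN] by (rule s2)
  have n2: "ss' ! i" unfolding ss'_def swap_at_nth2[OF i1 iN] by (rule s1)
  have rel: "\<Phi> h ss' = \<Phi> (kop (\<lambda>x1 x2. Qtilde (Q (fst x2) (fst x1))) i (kswap i h)) (swap_at i ss')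
                 + \<Phi> (gker i h) (del2_at i ss')"
    using rel3 hF i1 iN n1 n2 lss' n_def by auto
  have e1: "kop (\<lambda>x1 x2. Qtilde (Q (fst x2) (fst x1))) i (kswap i h) = f"
  proof (intro ext)
    fix xs :: "(real \<times> (real^'z)) list" and w :: "'r list"
    show "kop (\<lambda>x1 x2. Qtilde (Q (fst x2) (fst x1))) i (kswap i h) xs w = f xs w"
    proof (cases "length xs = n")
      case True
      have hx: "kswap i h xs = act_at (Mi (fst (xs ! i)) (fst (xs ! (i-1)))) i (f xs)"
        unfolding kswap_def h_def kop_def using True i1 iN n_def
        by (simp add: swap_at_nth1' swap_at_nth2' swap_swap)
      show ?thesis
      proof (cases "length w = n")
        case True
        then show ?thesis unfolding kop_def hx using i1 iN n_def
          by (simp add: act_at_comp act_at_id Mi_def invertible_mi inv)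
      next
        case False
        have "\<forall>u. length u = length w \<longrightarrow> kswap i h xs u = 0"
          unfolding hx using False by (auto intro!: act_at_zero_len Fn_zero[OF fF] simp: n_def)
        then show ?thesis unfolding kop_def using False Fn_zero[OF fF] n_def
          by (simp add: act_at_zero_len)
      qed
    next
      case False
      have "\<forall>u. kswap i h xs u = 0"
        unfolding kswap_def h_def kop_def using False
        by (auto intro!: act_at_zero_len Fn_zero[OF fF] simp: n_def)
      then show ?thesis unfolding kop_def using False Fn_zero[OF fF] n_def
        by (simp add: act_at_zero_len)
    qed
  qed
  have e2: "gker i h = kscale (complex_of_real \<kappa>) (gker i f)"
  proof (intro ext)
    fix xs :: "(real \<times> (real^'z)) list" and w :: "'r list"
    have pt: "trace_at i (h (take (i-1) xs @ [x, x] @ drop (i-1) xs)) w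
         = complex_of_real \<kappa> * trace_at i (f (take (i-1) xs @ [x, x] @ drop (i-1) xs)) w" for x
    proof (cases "i - 1 \<le> length xs")
      case True
      define L where "L = take (i-1) xs @ [x, x] @ drop (i-1) xs"
      obtain k where ik: "i = Suc k" using i1 by (cases i) auto
      have lt: "length (take (i-1) xs) = i - 1" using True by simp
      have a1: "L ! (i-1) = x" "L ! i = x" unfolding L_def using lt ik by (simp_all add: nth_append)
      have a2: "swap_at i L = L" unfolding swap_at_def a1 by (metis a1 list_update_id)
      have hL: "h L = act_at (Mi (fst x) (fst x)) i (f L)"
        unfolding h_def kop_def kswap_def a1 a2 ..
      show ?thesis unfolding L_def[symmetric] hL
        by (rule trace_act) (use tr i1 iN in \<open>auto simp: Mi_def L_def n_def intro!: Fn_zero[OF fF]\<close>)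
    next
      case False
      then have "take (i-1) xs = xs" "drop (i-1) xs = []" by auto
      moreover have "length xs + 2 \<noteq> n" using False iN n_def by auto
      ultimately show ?thesis
        unfolding h_def kop_def kswap_def using Fn_zero[OF fF]
        by (simp add: trace_at_def act_at_zero_len n_def)
    qed
    show "gker i h xs w = kscale (complex_of_real \<kappa>) (gker i f) xs w"
      unfolding gker_def kscale_def pt by simp
  qed
  have e3: "swap_at i ss' = ss" "del2_at i ss' = del2_at i ss"
    using i1 iN by (simp_all add: ss'_def swap_swap del2_swap)
  have gF: "gker i f \<in> Fn (length (del2_at i ss))"
    using Fn_gker[OF fF i1 iN] del2_len[OF i1 iN] by simp
  have "\<Phi> h ss' = \<Phi> f ss + sc (complex_of_real \<kappa>) (\<Phi> (gker i f) (del2_at i ss))"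
    using rel unfolding e1 e2 e3 using scl gF by simp
  then show ?thesis unfolding h_def Mi_def ss'_def by (simp add: algebra_simps)
qed

end
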